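(* Let $\kappa\ge2$, $n\ge1$, $0\le u\le\kappa-1$ be integers and $0<\epsilon<1$. Define $\check q^{\{u\}}\in\mathbb{R}^{2^\kappa}$ by $\check q^{\{u\}}_i=0$ for $0\le i<2^u$ and $\check q^{\{u\}}_i=\frac{1}{2^\kappa-2^u}$ for $2^u\le i\le2^\kappa-1$. For each $(\kappa-1)$-dimensional subspace $S$ of $W$, define $\check q^{[S]}$ by $\check q^{[S]}_i=0$ if $\nu(i)\in S$ and $\check q^{[S]}_i=2^{1-\kappa}$ otherwise. Let $\mathcal{C}_u$ be the set of $q\in\mathbb{R}^{2^\kappa}$ such that: $q_0=0$; $q_i\ge0$ for all $i$; $\sum_iq_i=1$; $\|q-\bar q\|=\sqrt{\frac{2^u-1}{(2^\kappa-2^u)(2^\kappa-1)}}$ where $\bar q_0=0$, $\bar q_i=\frac{1}{2^\kappa-1}$ for $i\ge1$; and $\|q-\check q^{[S]}\|\ge\|\check q^{\{u\}}-\check q^{\{\kappa-1\}}\|$ for every $S\in\Xi(W,\kappa-1)$. Then $\check q^{\{u\}}\in\mathcal{C}_u$ and $\lambda(n,\epsilon,\check q^{\{u\}})\le\lambda(n,\epsilon,q)$ for all $q\in\mathcal{C}_u$.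
   Context: $W=\mathbb{F}_2^\kappa$; $\nu(i)\in W$ is the binary expansion of $i\in\{0,\dots,2^\kappa-1\}$ (so $\{\nu(i):i<2^u\}$ is a $u$-dimensional subspace); vectors $q$ are indexed $q_0,\dots,q_{2^\kappa-1}$, and $\|\cdot\|$ is the Euclidean norm (all vectors here have $0$-th coordinate $0$). For a subspace $S\subseteq W$, $\zeta(S,q)=\sum_{i:\nu(i)\in S}q_i$; $\Xi(W,\kappa-1)$ is the set of $(\kappa-1)$-dimensional subspaces of $W$. For real $q$ define $\lambda(n,\epsilon,q)=(2-\epsilon)^n2^{-\kappa}\Big(1+\sum_{S\in\Xi(W,\kappa-1)}\big(\tfrac{\epsilon}{2-\epsilon}\big)^{n(1-\zeta(S,q))}\Big)-1$ (the $\chi^2$ divergence between $p_{MZ}$ and $p_Mp_Z$ for the coset code over a binary erasure channel with erasure probability $\epsilon$, when $q$ is a generator matrix's column-distribution vector). $\check q^{\{u\}}$ is the subspace exclusion code excluding a $u$-dimensional subspace. *)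

theory Defs
  imports "HOL-Analysis.Analysis"
begin

text \<open>The vector space W = F_2^kappa, represented as the set of bit vectors
  (functions nat => bool) that vanish outside {0..<kappa}; addition is pointwise xor.\<close>

definition Wsp :: "nat \<Rightarrow> (nat \<Rightarrow> bool) set" where
  "Wsp \<kappa> = {v. \<forall>j. \<kappa> \<le> j \<longrightarrow> \<not> v j}"

definition vadd :: "(nat \<Rightarrow> bool) \<Rightarrow> (nat \<Rightarrow> bool) \<Rightarrow> (nat \<Rightarrow> bool)" where
  "vadd v w = (\<lambda>j. v j \<noteq> w j)"

definition vzero :: "nat \<Rightarrow> bool" where
  "vzero = (\<lambda>j. False)"

definition nu :: "nat \<Rightarrow> nat \<Rightarrow> (nat \<Rightarrow> bool)" where
  "nu \<kappa> i = (\<lambda>j. j < \<kappa> \<and> bit i j)"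

text \<open>Linear subspaces of W over F_2 (scalars 0,1: containing 0 and closed under addition).\<close>
definition is_subspace :: "nat \<Rightarrow> (nat \<Rightarrow> bool) set \<Rightarrow> bool" where
  "is_subspace \<kappa> S \<longleftrightarrow> S \<subseteq> Wsp \<kappa> \<and> vzero \<in> S \<and> (\<forall>v\<in>S. \<forall>w\<in>S. vadd v w \<in> S)"

text \<open>Xi(W,d): the d-dimensional subspaces (over F_2, dimension d iff 2^d elements).\<close>
definition Xi :: "nat \<Rightarrow> nat \<Rightarrow> (nat \<Rightarrow> bool) set set" where
  "Xi \<kappa> d = {S. is_subspace \<kappa> S \<and> card S = 2 ^ d}"

definition zeta :: "nat \<Rightarrow> (nat \<Rightarrow> bool) set \<Rightarrow> (nat \<Rightarrow> real) \<Rightarrow> real" where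
  "zeta \<kappa> S q = (\<Sum>i\<in>{i. i < 2 ^ \<kappa> \<and> nu \<kappa> i \<in> S}. q i)"

definition dist2k :: "nat \<Rightarrow> (nat \<Rightarrow> real) \<Rightarrow> (nat \<Rightarrow> real) \<Rightarrow> real" where
  "dist2k \<kappa> p q = sqrt (\<Sum>i<2 ^ \<kappa>. (p i - q i)\<^sup>2)"

definition lam :: "nat \<Rightarrow> nat \<Rightarrow> real \<Rightarrow> (nat \<Rightarrow> real) \<Rightarrow> real" where
  "lam \<kappa> n \<epsilon> q = (2 - \<epsilon>) ^ n * 2 powr (- real \<kappa>) *
     (1 + (\<Sum>S\<in>Xi \<kappa> (\<kappa> - 1). (\<epsilon> / (2 - \<epsilon>)) powr (real n * (1 - zeta \<kappa> S q)))) - 1"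

text \<open>Subspace exclusion code excluding the u-dimensional subspace {nu(i): i < 2^u}.\<close>
definition qcheck :: "nat \<Rightarrow> nat \<Rightarrow> (nat \<Rightarrow> real)" where
  "qcheck \<kappa> u = (\<lambda>i. if i < 2 ^ u then 0 else 1 / (2 ^ \<kappa> - 2 ^ u))"

definition qcheckS :: "nat \<Rightarrow> (nat \<Rightarrow> bool) set \<Rightarrow> (nat \<Rightarrow> real)" where
  "qcheckS \<kappa> S = (\<lambda>i. if nu \<kappa> i \<in> S then 0 else 2 powr (1 - real \<kappa>))"

definition qbar :: "nat \<Rightarrow> (nat \<Rightarrow> real)" where
  "qbar \<kappa> = (\<lambda>i. if i = 0 then 0 else 1 / (2 ^ \<kappa> - 1))"

definition Cset :: "nat \<Rightarrow> nat \<Rightarrow> (nat \<Rightarrow> real) set" where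
  "Cset \<kappa> u = {q. q 0 = 0 \<and> (\<forall>i<2 ^ \<kappa>. 0 \<le> q i) \<and> (\<Sum>i<2 ^ \<kappa>. q i) = 1 \<and>
      dist2k \<kappa> q (qbar \<kappa>) = sqrt ((2 ^ u - 1) / ((2 ^ \<kappa> - 2 ^ u) * (2 ^ \<kappa> - 1))) \<and>
      (\<forall>S\<in>Xi \<kappa> (\<kappa> - 1). dist2k \<kappa> q (qcheckS \<kappa> S) \<ge> dist2k \<kappa> (qcheck \<kappa> u) (qcheck \<kappa> (\<kappa> - 1)))}"

end

theory Submission
  imports Defs
begin


lemma N1_nonneg: fixes t::real assumes "t \<le> 0" shows "(t - 1) * exp t + 1 \<ge> 0"
proof -
  have "(\<lambda>x. (x - 1) * exp x + 1) 0 \<le> (\<lambda>x. (x - 1) * exp x + 1) t"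
    apply (rule DERIV_nonpos_imp_nonincreasing[OF assms])
    apply (rule exI[where x="_ * exp _"])
    apply (rule conjI)
     apply (rule derivative_eq_intros refl | simp)+
    apply (simp add: algebra_simps)
    apply (auto simp: mult_nonpos_nonneg)
    done
  then show ?thesis by simp
qed

lemma N_nonpos: fixes t::real assumes "t \<le> 0" shows "(t - 2) * exp t + t + 2 \<le> 0"
proof -
  have "(\<lambda>x. (x - 2) * exp x + x + 2) t \<le> (\<lambda>x. (x - 2) * exp x + x + 2) 0"
    apply (rule DERIV_nonneg_imp_nondecreasing[OF assms])
    apply (rule exI[where x="(_ - 1) * exp _ + 1"])
    apply (rule conjI)
     apply (rule derivative_eq_intros refl | simp)+
     apply (simp add: algebra_simps)
    using N1_nonneg by auto
  then show ?thesis by simp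
qed

definition psi :: "real \<Rightarrow> real" where "psi t = (exp t - 1 - t) / t^2"

lemma psi_mono_neg: fixes s t :: real assumes "s \<le> t" "t < 0" shows "psi s \<le> psi t"
  unfolding psi_def
proof (rule DERIV_nonneg_imp_nondecreasing[OF assms(1)])
  fix x assume x: "s \<le> x" "x \<le> t"
  hence xn: "x < 0" using assms by auto
  have d: "((\<lambda>y. (exp y - 1 - y) / y^2) has_field_derivative
     ((exp x - 1) * x^2 - (2 * x) * (exp x - 1 - x)) / (x^2)^2) (at x)"
  proof -
    have a: "((\<lambda>y. exp y - 1 - y) has_real_derivative (exp x - 1)) (at x)"
      by (auto intro!: derivative_eq_intros)
    have b: "((\<lambda>y. y^2) has_real_derivative (2*x)) (at x)"
      by (auto intro!: derivative_eq_intros)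
    show ?thesis using DERIV_quotient[OF a b] xn by (simp add: mult.commute)
  qed
  have num: "(exp x - 1) * x^2 - (2 * x) * (exp x - 1 - x) = x * ((x - 2) * exp x + x + 2)"
    by (simp add: algebra_simps power2_eq_square)
  have "x * ((x - 2) * exp x + x + 2) \<ge> 0"
    using N_nonpos[of x] xn by (simp add: mult_nonpos_nonpos)
  then show "\<exists>y. ((\<lambda>y. (exp y - 1 - y) / y^2) has_field_derivative y) (at x) \<and> 0 \<le> y"
    using d num by (intro exI[of _ "((exp x - 1) * x^2 - (2 * x) * (exp x - 1 - x)) / (x^2)^2"]) auto
qed

lemma exp_le_quad_neg: fixes t::real assumes "t \<le> 0" shows "exp t \<le> 1 + t + t^2/2"
proof -
  have "(\<lambda>x. 1 + x + x^2/2 - exp x) 0 \<le> (\<lambda>x. 1 + x + x^2/2 - exp x) t"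
    apply (rule DERIV_nonpos_imp_nonincreasing[OF assms])
    apply (rule exI[where x="1 + _ - exp _"])
    apply (rule conjI)
     apply (rule derivative_eq_intros refl | simp)+
    done
  then show ?thesis by simp
qed

lemma exp_quad: fixes s t :: real assumes "s < 0" "s \<le> t"
  shows "exp t \<ge> 1 + t + psi s * t^2"
proof (cases "t = 0")
  case True then show ?thesis by simp
next
  case False
  show ?thesis
  proof (cases "t < 0")
    case True
    have "psi s \<le> psi t" using psi_mono_neg assms True by auto
    hence "psi s * t^2 \<le> psi t * t^2" by (simp add: mult_right_mono)
    also have "psi t * t^2 = exp t - 1 - t" using False by (simp add: psi_def)
    finally show ?thesis by simp
  next
    case nt: False
    have "psi s \<le> 1/2"
      using exp_le_quad_neg[of s] assms by (simp add: psi_def divide_le_eq)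
    hence "psi s * t^2 \<le> 1/2 * t^2" by (rule mult_right_mono) auto
    also have "\<dots> \<le> exp t - 1 - t" using exp_lower_Taylor_quadratic[of t] nt by simp
    finally show ?thesis by simp
  qed
qed




lemma Wsp_Suc: "Wsp (Suc k) = Wsp k \<union> (\<lambda>v. v(k:=True)) ` Wsp k"
proof (intro set_eqI iffI)
  fix v assume v: "v \<in> Wsp (Suc k)"
  show "v \<in> Wsp k \<union> (\<lambda>v. v(k:=True)) ` Wsp k"
  proof (cases "v k")
    case True
    have "v(k:=False) \<in> Wsp k" using v by (auto simp: Wsp_def)
    moreover have "v = (v(k:=False))(k:=True)" using True by (simp add: fun_eq_iff)
    ultimately show ?thesis by blast
  next
    case False
    then have "v \<in> Wsp k" using v by (auto simp: Wsp_def) (metis Suc_leI le_neq_implies_less)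
    then show ?thesis by blast
  qed
qed (auto simp: Wsp_def)

lemma Wsp_0: "Wsp 0 = {\<lambda>_. False}" by (auto simp: Wsp_def)

lemma finite_Wsp: "finite (Wsp k)"
  by (induction k) (simp_all add: Wsp_Suc Wsp_0)

lemma sum_prod_Wsp:
  fixes f :: "nat \<Rightarrow> bool \<Rightarrow> real"
  shows "(\<Sum>v\<in>Wsp k. \<Prod>j<k. f j (v j)) = (\<Prod>j<k. f j False + f j True)"
proof (induction k)
  case 0
  show ?case by (simp add: Wsp_0)
next
  case (Suc k)
  have disj: "Wsp k \<inter> (\<lambda>v. v(k:=True)) ` Wsp k = {}" by (auto simp: Wsp_def)
  have inj: "inj_on (\<lambda>v. v(k:=True)) (Wsp k)"
  proof (rule inj_onI)
    fix v w assume vw: "v \<in> Wsp k" "w \<in> Wsp k" "v(k:=True) = w(k:=True)"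
    show "v = w"
    proof
      fix x show "v x = w x"
      proof (cases "x = k")
        case True then show ?thesis using vw by (simp add: Wsp_def)
      next
        case False then show ?thesis using fun_cong[OF vw(3), of x] by simp
      qed
    qed
  qed
  have "(\<Sum>v\<in>Wsp (Suc k). \<Prod>j<Suc k. f j (v j))
     = (\<Sum>v\<in>Wsp k. \<Prod>j<Suc k. f j (v j)) + (\<Sum>v\<in>(\<lambda>v. v(k:=True)) ` Wsp k. \<Prod>j<Suc k. f j (v j))"
    unfolding Wsp_Suc by (rule sum.union_disjoint) (use disj finite_Wsp in auto)
  also have "(\<Sum>v\<in>Wsp k. \<Prod>j<Suc k. f j (v j)) = (\<Sum>v\<in>Wsp k. (\<Prod>j<k. f j (v j)) * f k False)"
    by (rule sum.cong) (auto simp: Wsp_def)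
  also have "(\<Sum>v\<in>(\<lambda>v. v(k:=True)) ` Wsp k. \<Prod>j<Suc k. f j (v j))
      = (\<Sum>v\<in>Wsp k. \<Prod>j<Suc k. f j ((v(k:=True)) j))"
    by (rule sum.reindex[OF inj, unfolded comp_def])
  also have "\<dots> = (\<Sum>v\<in>Wsp k. (\<Prod>j<k. f j (v j)) * f k True)"
    by (rule sum.cong) auto
  finally show ?case
    by (simp only: Suc.IH prod.lessThan_Suc flip: sum_distrib_right distrib_left)
qed

lemma card_Wsp: "card (Wsp k) = 2 ^ k"
proof -
  have "real (card (Wsp k)) = (\<Sum>v\<in>Wsp k. \<Prod>j<k. (\<lambda>j b. 1::real) j (v j))" by simp
  also have "\<dots> = 2 ^ k" by (subst sum_prod_Wsp) simp
  finally show ?thesis by (metis of_nat_eq_of_nat_power_cancel_iff of_nat_numeral)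
qed

definition chi :: "nat \<Rightarrow> (nat \<Rightarrow> bool) \<Rightarrow> (nat \<Rightarrow> bool) \<Rightarrow> real" where
  "chi k a v = (\<Prod>j<k. if a j \<and> v j then -1 else 1)"

lemma chi_pm: "chi k a v = 1 \<or> chi k a v = -1"
  by (induction k) (auto simp: chi_def)

lemma chi_vadd: "chi k a (vadd v w) = chi k a v * chi k a w"
  unfolding chi_def vadd_def by (subst prod.distrib[symmetric]) (rule prod.cong, auto)

lemma chi_sym: "chi k a v = chi k v a"
  unfolding chi_def by (rule prod.cong) auto

lemma chi_zero: "chi k a vzero = 1" "chi k vzero a = 1"
  by (auto simp: chi_def vzero_def)

lemma sum_chi: "(\<Sum>a\<in>Wsp k. chi k a x) = (if \<forall>j<k. \<not> x j then 2 ^ k else 0)"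
proof -
  have "(\<Sum>a\<in>Wsp k. chi k a x) = (\<Sum>a\<in>Wsp k. \<Prod>j<k. (\<lambda>j b. if b \<and> x j then -1 else 1::real) j (a j))"
    unfolding chi_def by simp
  also have "\<dots> = (\<Prod>j<k. 1 + (if x j then -1 else 1::real))"
    by (subst sum_prod_Wsp) simp
  also have "\<dots> = (if \<forall>j<k. \<not> x j then 2 ^ k else 0)"
  proof (cases "\<forall>j<k. \<not> x j")
    case True then show ?thesis by simp
  next
    case False
    then obtain j where "j < k" "x j" by auto
    have "(\<Prod>j<k. 1 + (if x j then -1 else 1::real)) = 0"
      by (rule prod_zero) (use \<open>j < k\<close> \<open>x j\<close> in auto)
    then show ?thesis using False by simp
  qed
  finally show ?thesis .
qed

lemma chi_e: "m < k \<Longrightarrow> chi k a (\<lambda>i. i = m) = (if a m then -1 else 1)"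
proof -
  assume m: "m < k"
  have "chi k a (\<lambda>i. i = m) = (\<Prod>j<k. if j = m then (if a m then -1 else 1) else 1)"
    unfolding chi_def by (rule prod.cong) auto
  also have "\<dots> = (if a m then -1 else 1)" using m by (subst prod.delta) auto
  finally show ?thesis .
qed

lemma vadd_Wsp: "v \<in> Wsp k \<Longrightarrow> w \<in> Wsp k \<Longrightarrow> vadd v w \<in> Wsp k"
  by (auto simp: Wsp_def vadd_def)
lemma vadd_cancel: "vadd v (vadd v w) = w"
  by (auto simp: vadd_def)
lemma vadd_comm: "vadd v w = vadd w v"
  by (auto simp: vadd_def)

definition Ker where "Ker k a = {v \<in> Wsp k. chi k a v = 1}"

lemma Ker_Xi:
  assumes "a \<in> Wsp k" "a \<noteq> vzero"
  shows "Ker k a \<in> Xi k (k - 1)"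
proof -
  have "\<exists>j<k. a j"
  proof (rule ccontr)
    assume "\<not> (\<exists>j<k. a j)"
    then have "a = vzero" using assms(1) by (auto simp: Wsp_def vzero_def fun_eq_iff) (metis not_le)
    then show False using assms(2) by simp
  qed
  then obtain j where j: "j < k" "a j" by blast
  have fin: "finite (Ker k a)" using finite_Wsp by (auto simp: Ker_def)
  have "(\<Sum>v\<in>Wsp k. chi k a v) = 0" using sum_chi[of k a] j by (auto simp: chi_sym[of k a])
  have "real (card (Ker k a)) = (\<Sum>v\<in>Wsp k. if chi k a v = 1 then 1 else 0)"
    unfolding Ker_def using finite_Wsp by (simp add: sum.inter_filter[symmetric])
  also have "\<dots> = (\<Sum>v\<in>Wsp k. (1 + chi k a v) / 2)"
    by (rule sum.cong) (use chi_pm in fastforce)+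
  also have "\<dots> = (card (Wsp k) + (\<Sum>v\<in>Wsp k. chi k a v)) / 2"
    by (simp add: sum_divide_distrib[symmetric] sum.distrib)
  also have "\<dots> = 2 ^ (k - 1)"
    using \<open>(\<Sum>v\<in>Wsp k. chi k a v) = 0\<close> j by (simp add: card_Wsp power_diff)
  finally have "card (Ker k a) = 2 ^ (k - 1)" by (metis of_nat_eq_of_nat_power_cancel_iff of_nat_numeral)
  moreover have "is_subspace k (Ker k a)"
    unfolding is_subspace_def Ker_def
    by (auto simp: chi_zero vadd_Wsp chi_vadd) (auto simp: Wsp_def vzero_def)
  ultimately show ?thesis by (simp add: Xi_def)
qed

lemma Ker_inj: "inj_on (Ker k) (Wsp k)"
proof (rule inj_onI)
  fix a b assume ab: "a \<in> Wsp k" "b \<in> Wsp k" "Ker k a = Ker k b"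
  show "a = b"
  proof
    fix j show "a j = b j"
    proof (cases "j < k")
      case True
      have e: "(\<lambda>i. i = j) \<in> Wsp k" using True by (auto simp: Wsp_def)
      have "(\<lambda>i. i = j) \<in> Ker k a \<longleftrightarrow> \<not> a j" using e True by (simp add: Ker_def chi_e)
      moreover have "(\<lambda>i. i = j) \<in> Ker k b \<longleftrightarrow> \<not> b j" using e True by (simp add: Ker_def chi_e)
      ultimately show ?thesis using ab by auto
    next
      case False then show ?thesis using ab by (auto simp: Wsp_def)
    qed
  qed
qed




lemma Xi_Ker:
  assumes k: "k \<ge> 1" and S: "S \<in> Xi k (k - 1)"
  shows "\<exists>a\<in>Wsp k - {vzero}. S = Ker k a"
proof -
  have sub: "S \<subseteq> Wsp k" and z: "vzero \<in> S" and cl: "\<And>v w. v \<in> S \<Longrightarrow> w \<in> S \<Longrightarrow> vadd v w \<in> S"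
    and cS: "card S = 2 ^ (k - 1)"
    using S by (auto simp: Xi_def is_subspace_def)
  have finS: "finite S" using sub finite_Wsp finite_subset by blast
  define C where "C = Wsp k - S"
  have cC: "card C = 2 ^ (k - 1)"
  proof -
    have "card C = 2 ^ k - 2 ^ (k - 1)" unfolding C_def
      using card_Diff_subset[OF finS sub] cS card_Wsp by simp
    also have "\<dots> = 2 ^ (k - 1)" using k
      by (metis Suc_diff_1 diff_Suc_1 less_le_trans mult_2 power_Suc zero_less_one add_diff_cancel_left' diff_add_inverse)
    finally show ?thesis .
  qed
  have cancel_in: "v \<in> S" if "vadd v w \<in> S" "w \<in> S" for v w
    using cl[OF that] by (metis vadd_cancel vadd_comm)
  have CC: "vadd v w \<in> S" if v: "v \<in> C" and w: "w \<in> C" for v w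
  proof -
    have vW: "v \<in> Wsp k" and vS: "v \<notin> S" using v by (auto simp: C_def)
    have "vadd v ` S \<subseteq> C"
    proof
      fix x assume "x \<in> vadd v ` S"
      then obtain s where s: "s \<in> S" "x = vadd v s" by auto
      have "x \<in> Wsp k" using s sub vW vadd_Wsp by blast
      moreover have "x \<notin> S" using s vS cancel_in by blast
      ultimately show "x \<in> C" by (simp add: C_def)
    qed
    moreover have "inj_on (vadd v) S" by (metis inj_onI vadd_cancel)
    then have "card (vadd v ` S) = card C" using cS cC by (simp add: card_image)
    ultimately have "vadd v ` S = C" using finite_Wsp
      by (intro card_subset_eq) (auto simp: C_def)
    then obtain s where "s \<in> S" "w = vadd v s" using w by auto
    then show ?thesis by (simp add: vadd_cancel)
  qed
  have psi: "(vadd v w \<notin> S) \<longleftrightarrow> ((v \<notin> S) \<noteq> (w \<notin> S))" if "v \<in> Wsp k" "w \<in> Wsp k" for v w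
  proof (cases "v \<in> S")
    case True
    then show ?thesis using cl cancel_in[of w v] by (auto simp: vadd_comm[of v w])
  next
    case False
    show ?thesis
    proof (cases "w \<in> S")
      case True then show ?thesis using False cancel_in[of v w] by auto
    next
      case wF: False
      then show ?thesis using False CC that by (auto simp: C_def)
    qed
  qed
  define e where "e j = (\<lambda>i::nat. i = j)" for j
  define a where "a = (\<lambda>j. j < k \<and> e j \<notin> S)"
  have aW: "a \<in> Wsp k" by (auto simp: a_def Wsp_def)
  have key: "\<forall>v\<in>Wsp k. (\<forall>j\<ge>m. \<not> v j) \<longrightarrow> (v \<in> S \<longleftrightarrow> chi k a v = 1)" for m
  proof (induction m)
    case 0
    have "v = vzero" if "\<forall>j\<ge>0. \<not> v j" for v :: "nat \<Rightarrow> bool" using that by (auto simp: vzero_def)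
    then show ?case using z chi_zero by (metis le0)
  next
    case (Suc m)
    show ?case
    proof (intro ballI impI)
      fix v assume vW: "v \<in> Wsp k" and sv: "\<forall>j\<ge>Suc m. \<not> v j"
      show "v \<in> S \<longleftrightarrow> chi k a v = 1"
      proof (cases "v m")
        case False
        then have "\<forall>j\<ge>m. \<not> v j" using sv by (metis Suc_leI le_neq_implies_less)
        then show ?thesis using Suc.IH vW by blast
      next
        case True
        then have mk: "m < k" using vW by (auto simp: Wsp_def) (meson not_le)
        define v' where "v' = v(m:=False)"
        have v'W: "v' \<in> Wsp k" using vW by (auto simp: v'_def Wsp_def)
        have v's: "\<forall>j\<ge>m. \<not> v' j" using sv by (auto simp: v'_def)
        have eW: "e m \<in> Wsp k" using mk by (auto simp: e_def Wsp_def)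
        have vv: "v = vadd v' (e m)" using True by (auto simp: v'_def e_def vadd_def fun_eq_iff)
        have ih: "v' \<in> S \<longleftrightarrow> chi k a v' = 1" using Suc.IH v'W v's by blast
        have ce: "chi k a (e m) = (if a m then -1 else 1)" using chi_e[OF mk] by (simp add: e_def)
        have am: "a m \<longleftrightarrow> e m \<notin> S" using mk by (simp add: a_def)
        have "v \<notin> S \<longleftrightarrow> ((v' \<notin> S) \<noteq> (e m \<notin> S))" using psi[OF v'W eW] vv by simp
        moreover have "chi k a v = chi k a v' * chi k a (e m)" using vv chi_vadd by simp
        ultimately show ?thesis using ih ce am chi_pm[of k a v'] by auto
      qed
    qed
  qed
  have SK: "S = Ker k a"
  proof
    show "S \<subseteq> Ker k a" using key[of k] sub by (auto simp: Ker_def Wsp_def)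
    show "Ker k a \<subseteq> S" using key[of k] by (auto simp: Ker_def Wsp_def)
  qed
  have "a \<noteq> vzero"
  proof
    assume "a = vzero"
    then have "Ker k a = Wsp k" by (auto simp: Ker_def chi_sym[of k a] chi_zero)
    then have "card S = 2 ^ k" using SK card_Wsp by simp
    then show False using cS k by simp
  qed
  then show ?thesis using aW SK by blast
qed

lemma Xi_eq: "k \<ge> 1 \<Longrightarrow> Xi k (k - 1) = Ker k ` (Wsp k - {vzero})"
  using Xi_Ker Ker_Xi by blast

lemma sum_Xi: "k \<ge> 1 \<Longrightarrow> (\<Sum>S\<in>Xi k (k - 1). g S) = (\<Sum>a\<in>Wsp k - {vzero}. g (Ker k a))"
  by (subst Xi_eq, assumption, subst sum.reindex) (auto intro: inj_on_subset[OF Ker_inj])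




lemma bit_lt: "(i::nat) < 2 ^ k \<Longrightarrow> bit i j \<Longrightarrow> j < k"
  by (metis bit_take_bit_iff take_bit_nat_eq_self_iff)

lemma nu_Wsp: "nu k i \<in> Wsp k"
  by (auto simp: nu_def Wsp_def)

lemma nu_inj: "inj_on (nu k) {..<2 ^ k}"
proof (rule inj_onI)
  fix i j assume ij: "i \<in> {..<2 ^ k}" "j \<in> {..<2 ^ k}" "nu k i = nu k j"
  show "i = j"
  proof (rule bit_eqI)
    fix n
    show "bit i n = bit j n"
      using fun_cong[OF ij(3), of n] bit_lt[of i k n] bit_lt[of j k n] ij(1,2)
      by (auto simp: nu_def)
  qed
qed

lemma nu_bij: "bij_betw (nu k) {..<2 ^ k} (Wsp k)"
proof -
  have "nu k ` {..<2 ^ k} = Wsp k"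
    by (rule card_subset_eq) (use finite_Wsp nu_Wsp card_Wsp card_image[OF nu_inj] in auto)
  then show ?thesis using nu_inj by (simp add: bij_betw_def)
qed

lemma nu_zero: "i < 2 ^ k \<Longrightarrow> (\<forall>j<k. \<not> nu k i j) \<longleftrightarrow> i = 0"
proof
  assume i: "i < 2 ^ k" and h: "\<forall>j<k. \<not> nu k i j"
  show "i = 0"
  proof (rule bit_eqI)
    fix n show "bit i n = bit 0 n" using h bit_lt[OF i, of n] by (auto simp: nu_def)
  qed
qed (auto simp: nu_def)

lemma nu_mono: "i < 2 ^ u \<Longrightarrow> u \<le> k \<Longrightarrow> nu k i = nu u i"
  using bit_lt[of i u] by (auto simp: nu_def fun_eq_iff) (meson less_le_trans)

lemma sum_nu: "(\<Sum>i<2 ^ k. g (nu k i)) = (\<Sum>v\<in>Wsp k. g v)"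
  using sum.reindex_bij_betw[OF nu_bij, of g] by simp

definition Q :: "nat \<Rightarrow> (nat \<Rightarrow> real) \<Rightarrow> (nat \<Rightarrow> bool) \<Rightarrow> real" where
  "Q k q a = (\<Sum>i<2 ^ k. q i * chi k a (nu k i))"

lemma sumQ: "(\<Sum>a\<in>Wsp k. Q k q a) = 2 ^ k * q 0"
proof -
  have "(\<Sum>a\<in>Wsp k. Q k q a) = (\<Sum>i<2 ^ k. q i * (\<Sum>a\<in>Wsp k. chi k a (nu k i)))"
    unfolding Q_def by (subst sum.swap) (simp add: sum_distrib_left)
  also have "\<dots> = (\<Sum>i<(2::nat) ^ k. if i = 0 then 2 ^ k * q 0 else 0)"
    by (rule sum.cong) (auto simp: sum_chi nu_zero)
  also have "\<dots> = 2 ^ k * q 0" by (subst sum.delta) auto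
  finally show ?thesis .
qed

lemma sumQ2: "(\<Sum>a\<in>Wsp k. (Q k q a)^2) = 2 ^ k * (\<Sum>i<2 ^ k. (q i)^2)"
proof -
  have "(\<Sum>a\<in>Wsp k. (Q k q a)^2) =
     (\<Sum>a\<in>Wsp k. \<Sum>i<(2::nat) ^ k. \<Sum>j<(2::nat) ^ k. q i * q j * chi k a (vadd (nu k i) (nu k j)))"
    unfolding Q_def power2_eq_square sum_product chi_vadd by (simp add: algebra_simps)
  also have "\<dots> = (\<Sum>i<(2::nat) ^ k. \<Sum>j<(2::nat) ^ k. q i * q j * (\<Sum>a\<in>Wsp k. chi k a (vadd (nu k i) (nu k j))))"
    by (simp add: sum.swap[of _ "Wsp k"] sum_distrib_left)
  also have "\<dots> = (\<Sum>i<(2::nat) ^ k. \<Sum>j<(2::nat) ^ k. if j = i then 2 ^ k * (q i)^2 else 0)"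
  proof (rule sum.cong[OF refl], rule sum.cong[OF refl])
    fix i j assume i: "i \<in> {..<(2::nat)^k}" and j: "j \<in> {..<(2::nat)^k}"
    have "(\<forall>l<k. \<not> vadd (nu k i) (nu k j) l) \<longleftrightarrow> nu k i = nu k j"
      by (auto simp: vadd_def nu_def fun_eq_iff)
    also have "\<dots> \<longleftrightarrow> j = i" using inj_onD[OF nu_inj _ i j] by auto
    finally show "q i * q j * (\<Sum>a\<in>Wsp k. chi k a (vadd (nu k i) (nu k j))) = (if j = i then 2 ^ k * (q i)^2 else 0)"
      by (simp add: sum_chi power2_eq_square)
  qed
  also have "\<dots> = 2 ^ k * (\<Sum>i<2 ^ k. (q i)^2)"
    by (simp add: sum_distrib_left)
  finally show ?thesis .
qed

lemma zeta_Ker: "zeta k (Ker k a) q = ((\<Sum>i<2 ^ k. q i) + Q k q a) / 2"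
proof -
  have "zeta k (Ker k a) q = (\<Sum>i<2 ^ k. if chi k a (nu k i) = 1 then q i else 0)"
    unfolding zeta_def Ker_def using nu_Wsp
    by (subst sum.inter_filter[symmetric]) (auto intro: sum.cong)
  also have "\<dots> = (\<Sum>i<2 ^ k. (q i + q i * chi k a (nu k i)) / 2)"
    by (rule sum.cong) (use chi_pm in fastforce)+
  finally show ?thesis by (simp add: Q_def sum_divide_distrib[symmetric] sum.distrib)
qed




lemma sum_split_low:
  fixes g :: "nat \<Rightarrow> real"
  assumes "u \<le> m"
  shows "(\<Sum>i<(2::nat)^m. if i < 2^u then 0 else g i) = (\<Sum>i<(2::nat)^m. g i) - (\<Sum>i<(2::nat)^u. g i)"
proof -
  have sub: "{..<(2::nat)^u} \<subseteq> {..<2^m}" using assms by (simp add: power_increasing)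
  have "(\<Sum>i<(2::nat)^m. if i < 2^u then 0 else g i) =
      (\<Sum>i\<in>{..<2^m} - {..<2^u}. if i < 2^u then 0 else g i) + (\<Sum>i\<in>{..<2^u}. if i < 2^u then 0 else g i)"
    by (rule sum.subset_diff[OF sub]) simp
  also have "\<dots> = (\<Sum>i\<in>{..<2^m} - {..<2^u}. g i)" by simp
  also have "\<dots> = (\<Sum>i<(2::nat)^m. g i) - (\<Sum>i<(2::nat)^u. g i)"
    using sum.subset_diff[OF sub, of g] by simp
  finally show ?thesis .
qed

lemma dist2k_sq: "(dist2k k p q)^2 = (\<Sum>i<(2::nat)^k. (p i - q i)^2)"
  unfolding dist2k_def by (rule real_sqrt_pow2) (simp add: sum_nonneg)


lemma dist_qbar:
  assumes k: "k \<ge> 1" and q0: "q 0 = 0" and qs: "(\<Sum>i<(2::nat)^k. q i) = 1"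
  shows "(dist2k k q (qbar k))^2 = (\<Sum>i<(2::nat)^k. (q i)^2) - 1 / (2^k - 1)"
proof -
  define N :: real where "N = 2^k - 1"
  have Npos: "N > 0" using k unfolding N_def
    by (metis diff_gt_0_iff_gt one_less_numeral_iff one_less_power semiring_norm(76) less_le_trans zero_less_one order_le_less)
  have "(dist2k k q (qbar k))^2 = (\<Sum>i<(2::nat)^k. (q i)^2 - 2 * (q i / N) + (if i = 0 then 0 else 1 / N^2))"
    unfolding dist2k_sq
    by (rule sum.cong) (auto simp: qbar_def N_def q0 power2_eq_square algebra_simps)
  also have "\<dots> = (\<Sum>i<(2::nat)^k. (q i)^2) - (\<Sum>i<(2::nat)^k. 2 * (q i / N))
       + (\<Sum>i<(2::nat)^k. (if i = 0 then 0 else 1 / N^2))"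
    by (simp add: sum.distrib sum_subtractf)
  also have "(\<Sum>i<(2::nat)^k. 2 * (q i / N)) = 2 / N"
    by (simp add: sum_distrib_left[symmetric] sum_divide_distrib[symmetric] qs)
  also have "(\<Sum>i<(2::nat)^k. (if i = 0 then 0 else 1 / N^2)) =
      (\<Sum>i<(2::nat)^k. 1 / N^2 - (if i = 0 then 1 / N^2 else 0))"
    by (rule sum.cong) auto
  also have "\<dots> = (2^k - 1) / N^2"
    by (simp add: sum_subtractf diff_divide_distrib)
  also have "(2^k - 1) / N^2 = 1 / N" using Npos by (simp add: N_def power2_eq_square)
  finally show ?thesis by (simp add: N_def)
qed

lemma dist_S:
  fixes q :: "nat \<Rightarrow> real"
  shows "(dist2k k q (qcheckS k S))^2 = (\<Sum>i<(2::nat)^k. (q i)^2)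
     - 2 * (2 powr (1 - real k)) * ((\<Sum>i<(2::nat)^k. q i) - zeta k S q)
     + (2 powr (1 - real k))^2 * (2^k - card {i. i < (2::nat)^k \<and> nu k i \<in> S})"
proof -
  define T where "T = {i. i < (2::nat)^k \<and> nu k i \<in> S}"
  define c where "c = 2 powr (1 - real k)"
  define A where "A = {..<(2::nat)^k}"
  have TA: "T \<subseteq> A" by (auto simp: T_def A_def)
  have fA: "finite A" by (simp add: A_def)
  have z: "zeta k S q = (\<Sum>i\<in>T. q i)" by (simp add: zeta_def T_def)
  have "(dist2k k q (qcheckS k S))^2 = (\<Sum>i\<in>A. (q i - qcheckS k S i)^2)"
    by (simp add: dist2k_sq A_def)
  also have "\<dots> = (\<Sum>i\<in>A - T. (q i - qcheckS k S i)^2) + (\<Sum>i\<in>T. (q i - qcheckS k S i)^2)"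
    by (rule sum.subset_diff[OF TA fA])
  also have "(\<Sum>i\<in>A - T. (q i - qcheckS k S i)^2) = (\<Sum>i\<in>A - T. (q i)^2 - 2 * c * q i + c^2)"
    by (rule sum.cong) (auto simp: qcheckS_def T_def A_def c_def power2_eq_square algebra_simps)
  also have "(\<Sum>i\<in>T. (q i - qcheckS k S i)^2) = (\<Sum>i\<in>T. (q i)^2)"
    by (rule sum.cong) (auto simp: qcheckS_def T_def)
  also have "(\<Sum>i\<in>A - T. (q i)^2 - 2 * c * q i + c^2) =
     (\<Sum>i\<in>A - T. (q i)^2) - 2 * c * (\<Sum>i\<in>A - T. q i) + c^2 * card (A - T)"
    by (simp add: sum.distrib sum_subtractf sum_distrib_left)
  also have "card (A - T) = card A - card T" using TA fA by (simp add: card_Diff_subset finite_subset)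
  also have "(\<Sum>i\<in>A - T. (q i)^2) = (\<Sum>i\<in>A. (q i)^2) - (\<Sum>i\<in>T. (q i)^2)"
    using sum.subset_diff[OF TA fA, of "\<lambda>i. (q i)^2"] by simp
  also have "(\<Sum>i\<in>A - T. q i) = (\<Sum>i\<in>A. q i) - (\<Sum>i\<in>T. q i)"
    using sum.subset_diff[OF TA fA, of q] by simp
  finally show ?thesis
    using card_mono[OF fA TA] by (simp add: z c_def A_def of_nat_diff T_def)
qed

lemma card_T_Xi:
  assumes "S \<subseteq> Wsp k" "card S = 2 ^ (k - 1)"
  shows "card {i. i < (2::nat)^k \<and> nu k i \<in> S} = 2 ^ (k - 1)"
proof -
  have "nu k ` {i. i < (2::nat)^k \<and> nu k i \<in> S} = S"
    using assms(1) nu_bij[of k] by (auto simp: bij_betw_def)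
  moreover have "inj_on (nu k) {i. i < (2::nat)^k \<and> nu k i \<in> S}"
    by (rule inj_on_subset[OF nu_inj]) auto
  ultimately show ?thesis using assms(2) card_image by metis
qed




context
  fixes k u :: nat
  assumes k: "k \<ge> 1" and u: "u \<le> k - 1"
begin

definition "MM = (2::real)^k - 2^u"

lemma MM_pos: "MM > 0"
proof -
  have "u < k" using k u by simp
  then have "(2::real)^u < 2^k" by (simp add: power_strict_increasing)
  then show ?thesis by (simp add: MM_def)
qed

lemma qc_0: "qcheck k u 0 = 0" by (simp add: qcheck_def)
lemma qc_nonneg: "qcheck k u i \<ge> 0" using MM_pos by (simp add: qcheck_def MM_def)

lemma qc_sum: "(\<Sum>i<(2::nat)^k. qcheck k u i) = 1"
proof -
  have "(\<Sum>i<(2::nat)^k. qcheck k u i) = (\<Sum>i<(2::nat)^k. 1/MM) - (\<Sum>i<(2::nat)^u. 1/MM)"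
    unfolding qcheck_def MM_def using u by (subst sum_split_low[symmetric]) auto
  also have "\<dots> = ((2::real)^k - 2^u) / MM" by (simp add: diff_divide_distrib)
  finally show ?thesis using MM_pos by (simp add: MM_def)
qed

lemma qc_sq: "(\<Sum>i<(2::nat)^k. (qcheck k u i)^2) = 1 / MM"
proof -
  have "(\<Sum>i<(2::nat)^k. (qcheck k u i)^2) = (\<Sum>i<(2::nat)^k. 1/MM^2) - (\<Sum>i<(2::nat)^u. 1/MM^2)"
    unfolding qcheck_def MM_def using u
    by (subst sum_split_low[symmetric]) (auto intro!: sum.cong simp: power_divide)
  also have "\<dots> = ((2::real)^k - 2^u) / MM^2" by (simp add: diff_divide_distrib)
  also have "\<dots> = MM / MM^2" by (simp add: MM_def)
  finally show ?thesis using MM_pos by (simp add: power2_eq_square)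
qed

definition "LL = (2^(k-1) - 2^u) / MM"
definition "HH = (2^(k-1) - 2^u/2) / MM"

lemma LH: "LL < HH" "LL \<ge> 0"
proof -
  have "(2::real)^u \<le> 2^(k-1)" using u by (simp add: power_increasing)
  then show "LL \<ge> 0" using MM_pos by (simp add: LL_def)
  show "LL < HH" using MM_pos by (simp add: LL_def HH_def divide_strict_right_mono)
qed

lemma chi_restrict: "v \<in> Wsp u \<Longrightarrow> chi k a v = chi u a v"
  unfolding chi_def using u k
  by (intro prod.mono_neutral_right) (auto simp: Wsp_def)

lemma qc_zeta_Ker:
  assumes a: "a \<in> Wsp k" "a \<noteq> vzero"
  shows "zeta k (Ker k a) (qcheck k u) = LL \<or> zeta k (Ker k a) (qcheck k u) = HH"
proof -
  define g where "g i = (1 + chi k a (nu k i)) / 2 / MM" for i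
  have "zeta k (Ker k a) (qcheck k u) = (\<Sum>i<(2::nat)^k. qcheck k u i * ((1 + chi k a (nu k i)) / 2))"
    unfolding zeta_Ker Q_def
    by (simp add: sum_divide_distrib[symmetric] sum.distrib[symmetric] algebra_simps)
  also have "\<dots> = (\<Sum>i<(2::nat)^k. if i < 2^u then 0 else g i)"
    by (rule sum.cong) (use MM_pos in \<open>auto simp: qcheck_def g_def MM_def[symmetric] field_simps\<close>)
  also have "\<dots> = (\<Sum>i<(2::nat)^k. g i) - (\<Sum>i<(2::nat)^u. g i)"
    by (rule sum_split_low) (use u in simp)
  finally have z: "zeta k (Ker k a) (qcheck k u) = (\<Sum>i<(2::nat)^k. g i) - (\<Sum>i<(2::nat)^u. g i)" .
  have "\<exists>j<k. a j"
  proof (rule ccontr)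
    assume "\<not> (\<exists>j<k. a j)"
    then have "a = vzero" using a(1) by (auto simp: Wsp_def vzero_def fun_eq_iff) (metis not_le)
    then show False using a(2) by simp
  qed
  then have s1: "(\<Sum>i<(2::nat)^k. chi k a (nu k i)) = 0"
  proof -
    have "(\<Sum>i<(2::nat)^k. chi k a (nu k i)) = (\<Sum>v\<in>Wsp k. chi k a v)" by (rule sum_nu[of "chi k a" k])
    also have "\<dots> = (\<Sum>v\<in>Wsp k. chi k v a)" by (rule sum.cong[OF refl]) (rule chi_sym)
    also have "\<dots> = 0" using \<open>\<exists>j<k. a j\<close> by (simp add: sum_chi)
    finally show ?thesis .
  qed
  have "(\<Sum>i<(2::nat)^u. chi k a (nu k i)) = (\<Sum>i<(2::nat)^u. chi u a (nu u i))"
  proof (rule sum.cong[OF refl])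
    fix i assume "i \<in> {..<(2::nat)^u}"
    then have "nu k i = nu u i" using nu_mono[of i u k] u by simp
    then show "chi k a (nu k i) = chi u a (nu u i)" using chi_restrict[OF nu_Wsp[of u i]] by simp
  qed
  also have "\<dots> = (\<Sum>v\<in>Wsp u. chi u a v)" by (rule sum_nu[of "chi u a" u])
  also have "\<dots> = (\<Sum>v\<in>Wsp u. chi u v a)" by (rule sum.cong[OF refl]) (rule chi_sym)
  finally have s2: "(\<Sum>i<(2::nat)^u. chi k a (nu k i)) = 2^u \<or> (\<Sum>i<(2::nat)^u. chi k a (nu k i)) = 0"
    by (simp add: sum_chi)
  have G: "(\<Sum>i<(2::nat)^m. g i) = (2^m + (\<Sum>i<(2::nat)^m. chi k a (nu k i))) / 2 / MM" for m
    by (simp add: g_def sum_divide_distrib[symmetric] sum.distrib)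
  have kk: "(2::real)^k / 2 = 2^(k-1)" using k by (simp add: power_diff)
  define ss where "ss = (\<Sum>i<(2::nat)^u. chi k a (nu k i))"
  have zz: "zeta k (Ker k a) (qcheck k u) = ((2::real)^(k-1) - (2^u + ss)/2) / MM"
    unfolding z G s1 ss_def[symmetric] kk[symmetric] by (simp add: diff_divide_distrib)
  show ?thesis using s2 unfolding ss_def[symmetric] zz
    by (auto simp: LL_def HH_def)
qed

lemma two_pow_k: "(2::real)^k = 2 * 2^(k-1)"
  using k by (cases k) auto

lemma qc_zeta_ge: assumes "S \<in> Xi k (k - 1)" shows "zeta k S (qcheck k u) \<ge> LL"
proof -
  obtain a where a: "a \<in> Wsp k" "a \<noteq> vzero" "S = Ker k a" using Xi_Ker[OF k assms] by blast
  show ?thesis using qc_zeta_Ker[OF a(1,2)] LH a(3) by auto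
qed

definition "S0 = nu k ` {..<(2::nat)^(k-1)}"

lemma T_S0: "{i. i < (2::nat)^k \<and> nu k i \<in> S0} = {..<2^(k-1)}"
proof -
  have sub: "{..<(2::nat)^(k-1)} \<subseteq> {..<2^k}" by (simp add: power_increasing)
  show ?thesis
  proof (intro set_eqI iffI)
    fix x assume "x \<in> {i. i < (2::nat)^k \<and> nu k i \<in> S0}"
    then obtain y where y: "x < 2^k" "y < 2^(k-1)" "nu k x = nu k y" unfolding S0_def by auto
    have "y \<in> {..<2^k}" by (meson lessThan_iff subsetD sub y(2))
    then have "x = y" using y by (intro inj_onD[OF nu_inj[of k]]) auto
    then show "x \<in> {..<2^(k-1)}" using y by simp
  next
    fix x assume "x \<in> {..<(2::nat)^(k-1)}"
    then have "x \<in> {..<2^k}" by (meson subsetD sub)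
    then show "x \<in> {i. i < (2::nat)^k \<and> nu k i \<in> S0}" using \<open>x \<in> {..<(2::nat)^(k-1)}\<close> unfolding S0_def by auto
  qed
qed

lemma qc_S0: "dist2k k (qcheck k u) (qcheck k (k - 1)) = dist2k k (qcheck k u) (qcheckS k S0)"
proof -
  have "qcheck k (k-1) i = qcheckS k S0 i" if "i < 2^k" for i
  proof -
    have "i \<in> {i. i < (2::nat)^k \<and> nu k i \<in> S0} \<longleftrightarrow> i < 2^(k-1)" using T_S0 by auto
    moreover have "1 / ((2::real)^k - 2^(k-1)) = 2 powr (1 - real k)"
    proof -
      have "(2::real)^k = 2 * 2^(k-1)" by (rule two_pow_k)
      moreover have "2 powr (1 - real k) = 2 / 2^k"
        by (simp add: powr_diff powr_realpow)
      ultimately show ?thesis by simp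
    qed
    ultimately show ?thesis using that by (auto simp: qcheck_def qcheckS_def)
  qed
  then show ?thesis unfolding dist2k_def by (intro arg_cong[where f=sqrt] sum.cong) auto
qed

lemma zeta_S0: "zeta k S0 (qcheck k u) = LL"
proof -
  have "zeta k S0 (qcheck k u) = (\<Sum>i<(2::nat)^(k-1). qcheck k u i)"
    unfolding zeta_def T_S0 by simp
  also have "\<dots> = (\<Sum>i<(2::nat)^(k-1). if i < 2^u then 0 else 1 / MM)"
    by (rule sum.cong) (simp_all add: qcheck_def MM_def)
  also have "\<dots> = (\<Sum>i<(2::nat)^(k-1). 1 / MM) - (\<Sum>i<(2::nat)^u. 1/MM)"
    by (rule sum_split_low) (use u in simp)
  finally show ?thesis by (simp add: LL_def diff_divide_distrib)
qed

definition "cc = (2::real) powr (1 - real k)"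

lemma cc_pos: "cc > 0" by (simp add: cc_def)

lemma dist_gen:
  assumes "S \<subseteq> Wsp k" "card S = 2 ^ (k - 1)" "(\<Sum>i<(2::nat)^k. q i) = 1"
  shows "(dist2k k q (qcheckS k S))^2 = (\<Sum>i<(2::nat)^k. (q i)^2) - 2 * cc * (1 - zeta k S q) + cc^2 * 2^(k-1)"
proof -
  have "(2::real)^k - 2^(k-1) = 2^(k-1)" using two_pow_k by simp
  then show ?thesis using dist_S[of k q S] card_T_Xi[OF assms(1,2)] assms(3) by (simp add: cc_def)
qed

lemma d0_sq: "(dist2k k (qcheck k u) (qcheck k (k - 1)))^2 = 1 / MM - 2 * cc * (1 - LL) + cc^2 * 2^(k-1)"
proof -
  have "(2::real)^k - 2^(k-1) = 2^(k-1)" using two_pow_k by simp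
  then show ?thesis unfolding qc_S0 using dist_S[of k "qcheck k u" S0] T_S0 qc_sum qc_sq zeta_S0
    by (simp add: cc_def)
qed

lemma cond_iff:
  assumes "S \<in> Xi k (k - 1)" "(\<Sum>i<(2::nat)^k. q i) = 1" "(\<Sum>i<(2::nat)^k. (q i)^2) = 1 / MM"
  shows "dist2k k q (qcheckS k S) \<ge> dist2k k (qcheck k u) (qcheck k (k - 1)) \<longleftrightarrow> zeta k S q \<ge> LL"
proof -
  have S: "S \<subseteq> Wsp k" "card S = 2 ^ (k - 1)" using assms(1) by (auto simp: Xi_def is_subspace_def)
  have "dist2k k q (qcheckS k S) \<ge> dist2k k (qcheck k u) (qcheck k (k - 1)) \<longleftrightarrow>
     (dist2k k q (qcheckS k S))^2 \<ge> (dist2k k (qcheck k u) (qcheck k (k - 1)))^2"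
    by (simp add: dist2k_def sum_nonneg)
  also have "\<dots> \<longleftrightarrow> zeta k S q \<ge> LL"
    unfolding dist_gen[OF S assms(2)] d0_sq assms(3) using cc_pos by simp
  finally show ?thesis .
qed

end




lemma quad_sum:
  fixes x :: "'a \<Rightarrow> real" and al be ga h :: real
  shows "(\<Sum>a\<in>A. al + be * (x a - h) + ga * (x a - h)^2) =
     card A * al + be * ((\<Sum>a\<in>A. x a) - card A * h) + ga * ((\<Sum>a\<in>A. (x a)^2) - 2 * h * (\<Sum>a\<in>A. x a) + card A * h^2)"
  by (simp add: sum.distrib sum_subtractf sum_distrib_left sum_distrib_right power2_diff algebra_simps)

lemma quad_compare:
  fixes x y :: "'a \<Rightarrow> real" and c L H :: real
  assumes fin: "finite A" and c: "c > 0" and LH: "L < H"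
    and xL: "\<forall>a\<in>A. x a \<ge> L" and yLH: "\<forall>a\<in>A. y a = L \<or> y a = H"
    and s1: "(\<Sum>a\<in>A. x a) = (\<Sum>a\<in>A. y a)" and s2: "(\<Sum>a\<in>A. (x a)^2) = (\<Sum>a\<in>A. (y a)^2)"
  shows "(\<Sum>a\<in>A. exp (c * (y a - 1))) \<le> (\<Sum>a\<in>A. exp (c * (x a - 1)))"
proof -
  define E where "E = exp (c * (H - 1))"
  define s where "s = c * (L - H)"
  have sneg: "s < 0" using c LH by (simp add: s_def mult_pos_neg)
  define p where "p z = E + E * c * (z - H) + E * psi s * c^2 * (z - H)^2" for z
  have Fsplit: "exp (c * (z - 1)) = E * exp (c * (z - H))" for z
    by (simp add: E_def flip: exp_add) (simp add: algebra_simps)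
  have low: "exp (c * (z - 1)) \<ge> p z" if "z \<ge> L" for z
  proof -
    have "c * (z - H) \<ge> s" using that c by (simp add: s_def mult_left_mono)
    then have "exp (c * (z - H)) \<ge> 1 + c * (z - H) + psi s * (c * (z - H))^2"
      using exp_quad[OF sneg] by blast
    then have "E * exp (c * (z - H)) \<ge> E * (1 + c * (z - H) + psi s * (c * (z - H))^2)"
      by (simp add: E_def)
    then show ?thesis unfolding Fsplit p_def power_mult_distrib by (simp add: algebra_simps)
  qed
  have eq: "exp (c * (z - 1)) = p z" if "z = L \<or> z = H" for z
    using that
  proof
    assume z: "z = H" show ?thesis by (simp add: z p_def E_def)
  next
    assume z: "z = L"
    have "psi s * s^2 = exp s - 1 - s" using sneg by (simp add: psi_def)
    then have "E * exp s = E * (1 + s + psi s * s^2)" by simp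
    moreover have "p L = E * (1 + s + psi s * s^2)"
      unfolding p_def s_def power_mult_distrib by (simp add: algebra_simps)
    moreover have "exp (c * (L - 1)) = E * exp s" unfolding Fsplit s_def ..
    ultimately show ?thesis using z by simp
  qed
  have "(\<Sum>a\<in>A. exp (c * (y a - 1))) = (\<Sum>a\<in>A. p (y a))"
    using yLH eq by (intro sum.cong) auto
  also have "\<dots> = (\<Sum>a\<in>A. p (x a))"
    unfolding p_def quad_sum[of E "E * c" _ H "E * psi s * c^2"] s1 s2 ..
  also have "\<dots> \<le> (\<Sum>a\<in>A. exp (c * (x a - 1)))"
    using xL low by (intro sum_mono) auto
  finally show ?thesis .
qed




lemma vzero_Wsp: "vzero \<in> Wsp k" by (simp add: vzero_def Wsp_def)

lemma moments:
  fixes q :: "nat \<Rightarrow> real"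
  assumes q0: "q 0 = 0" and qs: "(\<Sum>i<(2::nat)^k. q i) = 1"
  shows "(\<Sum>a\<in>Wsp k - {vzero}. zeta k (Ker k a) q) = (real (card (Wsp k - {vzero})) - 1) / 2"
    and "(\<Sum>a\<in>Wsp k - {vzero}. (zeta k (Ker k a) q)^2) =
          (real (card (Wsp k - {vzero})) - 3 + 2^k * (\<Sum>i<(2::nat)^k. (q i)^2)) / 4"
proof -
  define A where "A = Wsp k - {vzero}"
  have z: "zeta k (Ker k a) q = (1 + Q k q a) / 2" for a by (simp add: zeta_Ker qs)
  have Q0: "Q k q vzero = 1" by (simp add: Q_def chi_zero qs)
  have sQ: "(\<Sum>a\<in>A. Q k q a) = -1"
    using sum.remove[OF finite_Wsp vzero_Wsp, of "Q k q"] sumQ[of k q] q0 Q0 by (simp add: A_def)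
  have sQ2: "(\<Sum>a\<in>A. (Q k q a)^2) = 2^k * (\<Sum>i<(2::nat)^k. (q i)^2) - 1"
    using sum.remove[OF finite_Wsp vzero_Wsp, of "\<lambda>a. (Q k q a)^2"] sumQ2[of k q] Q0 by (simp add: A_def)
  show "(\<Sum>a\<in>Wsp k - {vzero}. zeta k (Ker k a) q) = (real (card (Wsp k - {vzero})) - 1) / 2"
    unfolding A_def[symmetric] z using sQ
    by (simp add: sum_divide_distrib[symmetric] sum.distrib)
  have "(\<Sum>a\<in>A. (zeta k (Ker k a) q)^2) = (\<Sum>a\<in>A. (1 + 2 * Q k q a + (Q k q a)^2) / 4)"
    unfolding z by (rule sum.cong) (simp_all add: power2_eq_square algebra_simps)
  also have "\<dots> = (card A + 2 * (\<Sum>a\<in>A. Q k q a) + (\<Sum>a\<in>A. (Q k q a)^2)) / 4"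
    by (simp add: sum_divide_distrib[symmetric] sum.distrib sum_distrib_left)
  finally show "(\<Sum>a\<in>Wsp k - {vzero}. (zeta k (Ker k a) q)^2) =
          (real (card (Wsp k - {vzero})) - 3 + 2^k * (\<Sum>i<(2::nat)^k. (q i)^2)) / 4"
    unfolding A_def[symmetric] sQ sQ2 by simp
qed

theorem theorem9:
  fixes \<kappa> n u :: nat and \<epsilon> :: real
  assumes "\<kappa> \<ge> 2" and "n \<ge> 1" and "u \<le> \<kappa> - 1" and "0 < \<epsilon>" and "\<epsilon> < 1"
  shows "qcheck \<kappa> u \<in> Cset \<kappa> u \<and> (\<forall>q\<in>Cset \<kappa> u. lam \<kappa> n \<epsilon> (qcheck \<kappa> u) \<le> lam \<kappa> n \<epsilon> q)"
proof -
  have k: "\<kappa> \<ge> 1" using assms(1) by simp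
  note u = assms(3)
  define D :: real where "D = (2 ^ u - 1) / ((2 ^ \<kappa> - 2 ^ u) * (2 ^ \<kappa> - 1))"
  have Npos: "(2::real)^\<kappa> - 1 > 0" using k
    using one_less_power[of "2::real" \<kappa>] by simp
  have MM: "MM \<kappa> u > 0" by (rule MM_pos[OF k u])
  have Deq: "D = 1 / MM \<kappa> u - 1 / (2^\<kappa> - 1)"
  proof -
    have g: "(N - M) / (M * N) = 1 / M - 1 / N" if "M > 0" "N > 0" for M N :: real
      using that by (simp add: field_simps)
    have "D = (((2::real)^\<kappa> - 1) - (2^\<kappa> - 2^u)) / ((2^\<kappa> - 2^u) * (2^\<kappa> - 1))"
      unfolding D_def by simp
    also have "\<dots> = 1 / MM \<kappa> u - 1 / (2^\<kappa> - 1)"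
      using g[of "MM \<kappa> u" "2^\<kappa> - 1"] MM Npos unfolding MM_def[OF k u] by simp
    finally show ?thesis .
  qed
  have Dnn: "D \<ge> 0"
  proof -
    have "(1::real) \<le> 2^u" by simp
    then show ?thesis using MM Npos unfolding D_def MM_def[OF k u] by simp
  qed
  have dq: "dist2k \<kappa> q (qbar \<kappa>) = sqrt D \<longleftrightarrow> (\<Sum>i<(2::nat)^\<kappa>. (q i)^2) = 1 / MM \<kappa> u"
    if q0: "q 0 = 0" and qs: "(\<Sum>i<(2::nat)^\<kappa>. q i) = 1" for q
  proof -
    have "dist2k \<kappa> q (qbar \<kappa>) = sqrt D \<longleftrightarrow> (dist2k \<kappa> q (qbar \<kappa>))^2 = D"
      using Dnn by (auto simp: dist2k_def sum_nonneg)
    then show ?thesis using dist_qbar[OF k q0 qs] Deq by auto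
  qed
  have mem: "qcheck \<kappa> u \<in> Cset \<kappa> u"
  proof -
    have "dist2k \<kappa> (qcheck \<kappa> u) (qbar \<kappa>) = sqrt D"
      using dq[OF qc_0[OF k u] qc_sum[OF k u]] qc_sq[OF k u] by simp
    moreover have "\<forall>S\<in>Xi \<kappa> (\<kappa> - 1). dist2k \<kappa> (qcheck \<kappa> u) (qcheckS \<kappa> S) \<ge> dist2k \<kappa> (qcheck \<kappa> u) (qcheck \<kappa> (\<kappa> - 1))"
      using cond_iff[OF k u _ qc_sum[OF k u] qc_sq[OF k u]] qc_zeta_ge[OF k u] by blast
    ultimately show ?thesis
      using qc_0[OF k u] qc_nonneg[OF k u] qc_sum[OF k u] unfolding Cset_def mem_Collect_eq D_def[symmetric] by blast
  qed
  define b where "b = \<epsilon> / (2 - \<epsilon>)"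
  have b: "0 < b" "b < 1" using assms(4,5) by (auto simp: b_def divide_less_eq)
  define c where "c = - (real n * ln b)"
  have c: "c > 0" using b assms(2) by (simp add: c_def mult_pos_neg)
  have F: "b powr (real n * (1 - z)) = exp (c * (z - 1))" for z
    using b by (simp add: powr_def c_def algebra_simps)
  define A where "A = Wsp \<kappa> - {vzero}"
  have finA: "finite A" using finite_Wsp by (simp add: A_def)
  have opt: "lam \<kappa> n \<epsilon> (qcheck \<kappa> u) \<le> lam \<kappa> n \<epsilon> q" if q: "q \<in> Cset \<kappa> u" for q
  proof -
    have q0: "q 0 = 0" and qs: "(\<Sum>i<(2::nat)^\<kappa>. q i) = 1"
      and qd: "dist2k \<kappa> q (qbar \<kappa>) = sqrt D"
      and qS: "\<forall>S\<in>Xi \<kappa> (\<kappa> - 1). dist2k \<kappa> q (qcheckS \<kappa> S) \<ge> dist2k \<kappa> (qcheck \<kappa> u) (qcheck \<kappa> (\<kappa> - 1))"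
      using q unfolding Cset_def mem_Collect_eq D_def[symmetric] by blast+
    have qsq: "(\<Sum>i<(2::nat)^\<kappa>. (q i)^2) = 1 / MM \<kappa> u" using dq[OF q0 qs] qd by simp
    have zL: "\<forall>a\<in>A. zeta \<kappa> (Ker \<kappa> a) q \<ge> LL \<kappa> u"
    proof
      fix a assume a: "a \<in> A"
      have "Ker \<kappa> a \<in> Xi \<kappa> (\<kappa> - 1)" using a Ker_Xi by (auto simp: A_def)
      then show "zeta \<kappa> (Ker \<kappa> a) q \<ge> LL \<kappa> u"
        using qS cond_iff[OF k u _ qs qsq] by blast
    qed
    have yLH: "\<forall>a\<in>A. zeta \<kappa> (Ker \<kappa> a) (qcheck \<kappa> u) = LL \<kappa> u \<or> zeta \<kappa> (Ker \<kappa> a) (qcheck \<kappa> u) = HH \<kappa> u"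
      using qc_zeta_Ker[OF k u] by (auto simp: A_def)
    have m1: "(\<Sum>a\<in>A. zeta \<kappa> (Ker \<kappa> a) q) = (\<Sum>a\<in>A. zeta \<kappa> (Ker \<kappa> a) (qcheck \<kappa> u))"
      unfolding A_def moments(1)[OF q0 qs] moments(1)[OF qc_0[OF k u] qc_sum[OF k u]] ..
    have m2: "(\<Sum>a\<in>A. (zeta \<kappa> (Ker \<kappa> a) q)^2) = (\<Sum>a\<in>A. (zeta \<kappa> (Ker \<kappa> a) (qcheck \<kappa> u))^2)"
      unfolding A_def moments(2)[OF q0 qs] moments(2)[OF qc_0[OF k u] qc_sum[OF k u]] qsq qc_sq[OF k u] ..
    have main: "(\<Sum>a\<in>A. exp (c * (zeta \<kappa> (Ker \<kappa> a) (qcheck \<kappa> u) - 1))) \<le> (\<Sum>a\<in>A. exp (c * (zeta \<kappa> (Ker \<kappa> a) q - 1)))"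
      by (rule quad_compare[OF finA c LH(1)[OF k u] zL yLH m1 m2])
    have "(\<Sum>S\<in>Xi \<kappa> (\<kappa> - 1). b powr (real n * (1 - zeta \<kappa> S (qcheck \<kappa> u)))) \<le>
          (\<Sum>S\<in>Xi \<kappa> (\<kappa> - 1). b powr (real n * (1 - zeta \<kappa> S q)))"
      unfolding sum_Xi[OF k] F using main by (simp add: A_def)
    moreover have "(2 - \<epsilon>) ^ n * 2 powr (- real \<kappa>) > 0" using assms(5) by simp
    ultimately show ?thesis unfolding lam_def b_def[symmetric]
      by (simp add: mult_left_mono)
  qed
  show ?thesis using mem opt by blast
qed


end
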